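(* Let $K$ be a finite field and $R_2=K[x_1,x_2,\ldots]/(x_1^2,x_2^2,\ x_i-x_{i+2}^2 \mid i\geqslant 1)$. Then $R_2$ has exactly one prime ideal $\mathfrak m$, this ideal satisfies $\mathfrak m^2=\mathfrak m\neq 0$ (so every prime ideal of $R_2$ has avoidance), but $R_2$ is not an avoidance ring.
   Context: All rings are commutative with $1\neq 0$. An ideal $I$ of a ring $R$ has avoidance if whenever $I_1,\ldots,I_n$ are finitely many ideals of $R$ with $I\subseteq\bigcup_{k=1}^n I_k$, then $I\subseteq I_k$ for some $k$. A ring is an avoidance ring if every ideal of it has avoidance. *)

theory Defs
  imports "HOL-Algebra.Algebra" "HOL-Library.Poly_Mapping"
begin

definition has_avoidance :: "('a, 'b) ring_scheme \<Rightarrow> 'a set \<Rightarrow> bool" where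
  "has_avoidance R I \<longleftrightarrow>
     (\<forall>(n::nat) (Is :: nat \<Rightarrow> 'a set).
        (\<forall>k<n. ideal (Is k) R) \<and> I \<subseteq> (\<Union>k<n. Is k) \<longrightarrow> (\<exists>k<n. I \<subseteq> Is k))"

definition avoidance_ring :: "('a, 'b) ring_scheme \<Rightarrow> bool" where
  "avoidance_ring R \<longleftrightarrow> (\<forall>I. ideal I R \<longrightarrow> has_avoidance R I)"

text \<open>Polynomial ring K[x_0, x_1, ...] in countably many variables
  (monomials are finitely supported exponent vectors).\<close>
type_synonym 'a mpoly_inf = "(nat \<Rightarrow>\<^sub>0 nat) \<Rightarrow>\<^sub>0 'a"

definition poly_ring_inf :: "('a::comm_ring_1) mpoly_inf ring" where
  "poly_ring_inf = \<lparr>partial_object.carrier = UNIV, monoid.mult = (*), monoid.one = 1, ring.zero = 0, ring.add = (+)\<rparr>"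

definition Xv :: "nat \<Rightarrow> ('a::comm_ring_1) mpoly_inf" where
  "Xv i = Poly_Mapping.single (Poly_Mapping.single i 1) 1"

text \<open>Paper's variable x_(i+1) is Xv i here. Relations:
  x_1^2, x_2^2, x_i - x_(i+2)^2 (i >= 1).\<close>
definition R2_rels :: "('a::comm_ring_1) mpoly_inf set" where
  "R2_rels = {Xv 0 ^ 2, Xv 1 ^ 2} \<union> range (\<lambda>i. Xv i - Xv (i + 2) ^ 2)"

definition R2 :: "('a::comm_ring_1) mpoly_inf set ring" where
  "R2 = poly_ring_inf Quot (genideal poly_ring_inf R2_rels)"

end

theory Submission
  imports Defs
begin


lemma PR_simps [simp]:
  "carrier poly_ring_inf = UNIV" "monoid.mult poly_ring_inf = (*)" "monoid.one poly_ring_inf = 1"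
  "ring.zero poly_ring_inf = 0" "ring.add poly_ring_inf = (+)"
  by (simp_all add: poly_ring_inf_def)

lemma PR_cring: "cring (poly_ring_inf :: ('a::comm_ring_1) mpoly_inf ring)"
  apply (rule cringI)
    apply (rule abelian_groupI)
         apply (auto simp: algebra_simps)
   apply (metis add.commute ab_left_minus)
  apply (rule comm_monoidI)
  apply (auto simp: algebra_simps)
  done

lemma PR_a_inv [simp]: "a_inv (poly_ring_inf :: ('a::comm_ring_1) mpoly_inf ring) x = - x"
proof -
  interpret cring "poly_ring_inf :: 'a mpoly_inf ring" by (rule PR_cring)
  show ?thesis by (rule minus_equality) auto
qed

lemma PR_a_minus [simp]: "a_minus (poly_ring_inf :: ('a::comm_ring_1) mpoly_inf ring) x y = x - y"
  by (simp add: a_minus_def)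

definition tideal :: "('a::comm_ring_1) mpoly_inf set \<Rightarrow> bool" where
  "tideal S \<longleftrightarrow> 0 \<in> S \<and> (\<forall>a\<in>S. \<forall>b\<in>S. a + b \<in> S) \<and> (\<forall>a\<in>S. - a \<in> S) \<and> (\<forall>a\<in>S. \<forall>r. r * a \<in> S)"

lemma ideal_iff_tideal: "ideal S (poly_ring_inf :: ('a::comm_ring_1) mpoly_inf ring) \<longleftrightarrow> tideal S"
proof
  interpret cring "poly_ring_inf :: 'a mpoly_inf ring" by (rule PR_cring)
  assume "ideal S poly_ring_inf"
  then interpret ideal S "poly_ring_inf :: 'a mpoly_inf ring" .
  show "tideal S" unfolding tideal_def
    using a_closed a_inv_closed I_l_closed additive_subgroup.zero_closed[OF is_additive_subgroup] by auto
next
  interpret cring "poly_ring_inf :: 'a mpoly_inf ring" by (rule PR_cring)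
  assume T: "tideal S"
  show "ideal S poly_ring_inf"
    apply (intro idealI ring_axioms add.subgroupI)
    using T unfolding tideal_def by (auto simp: mult.commute)
qed

definition Lsum :: "((nat \<Rightarrow>\<^sub>0 nat) \<Rightarrow> 'a) \<Rightarrow> ('a::comm_ring_1) mpoly_inf \<Rightarrow> 'a" where
  "Lsum F p = (\<Sum>m\<in>Poly_Mapping.keys p. Poly_Mapping.lookup p m * F m)"

lemma Lsum_superset:
  assumes "finite S" "Poly_Mapping.keys p \<subseteq> S"
  shows "Lsum F p = (\<Sum>m\<in>S. Poly_Mapping.lookup p m * F m)"
  unfolding Lsum_def using assms
  by (intro sum.mono_neutral_left) (auto simp: in_keys_iff)

lemma Lsum_add: "Lsum F (p + q) = Lsum F p + Lsum F q"
proof -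
  let ?S = "Poly_Mapping.keys p \<union> Poly_Mapping.keys q \<union> Poly_Mapping.keys (p + q)"
  have "Lsum F (p + q) = (\<Sum>m\<in>?S. Poly_Mapping.lookup (p+q) m * F m)" by (rule Lsum_superset) auto
  moreover have "Lsum F p = (\<Sum>m\<in>?S. Poly_Mapping.lookup p m * F m)" by (rule Lsum_superset) auto
  moreover have "Lsum F q = (\<Sum>m\<in>?S. Poly_Mapping.lookup q m * F m)" by (rule Lsum_superset) auto
  ultimately show ?thesis by (simp add: lookup_add distrib_right sum.distrib)
qed

lemma Lsum_uminus: "Lsum F (- p) = - Lsum F p"
proof -
  have "Poly_Mapping.keys (-p) = Poly_Mapping.keys p" by (auto simp: in_keys_iff)
  then show ?thesis unfolding Lsum_def by (simp add: sum_negf)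
qed

lemma Lsum_diff: "Lsum F (p - q) = Lsum F p - Lsum F q"
  using Lsum_add[of F p "-q"] Lsum_uminus[of F q] by simp

lemma Lsum_zero [simp]: "Lsum F 0 = 0"
  by (simp add: Lsum_def)

lemma Lsum_single [simp]: "Lsum F (Poly_Mapping.single m x) = x * F m"
  by (simp add: Lsum_def)

lemma Lsum_sum: "finite A \<Longrightarrow> Lsum F (sum f A) = (\<Sum>i\<in>A. Lsum F (f i))"
  by (induction A rule: finite_induct) (auto simp: Lsum_add)

lemma poly_repr: "p = (\<Sum>m\<in>Poly_Mapping.keys p. Poly_Mapping.single m (Poly_Mapping.lookup p m))"
proof (rule poly_mapping_eqI)
  fix k
  show "Poly_Mapping.lookup p k = Poly_Mapping.lookup (\<Sum>m\<in>Poly_Mapping.keys p. Poly_Mapping.single m (Poly_Mapping.lookup p m)) k"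
    by (simp add: lookup_sum lookup_single when_def in_keys_iff)
qed

lemma mult_repr:
  "(g::('a::comm_ring_1) mpoly_inf) * p = (\<Sum>n\<in>Poly_Mapping.keys g. \<Sum>k\<in>Poly_Mapping.keys p. Poly_Mapping.single (n + k) (Poly_Mapping.lookup g n * Poly_Mapping.lookup p k))"
proof -
  have "g * p = (\<Sum>n\<in>Poly_Mapping.keys g. Poly_Mapping.single n (Poly_Mapping.lookup g n)) * (\<Sum>k\<in>Poly_Mapping.keys p. Poly_Mapping.single k (Poly_Mapping.lookup p k))"
    using poly_repr[of g] poly_repr[of p] by simp
  also have "\<dots> = (\<Sum>n\<in>Poly_Mapping.keys g. \<Sum>k\<in>Poly_Mapping.keys p. Poly_Mapping.single (n + k) (Poly_Mapping.lookup g n * Poly_Mapping.lookup p k))"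
    by (simp add: sum_product mult_single)
  finally show ?thesis .
qed

subsection \<open>Weights\<close>

definition e1 :: "nat \<Rightarrow> rat" where "e1 i = (if even i then 1 / 2 ^ (i div 2) else 0)"
definition e2 :: "nat \<Rightarrow> rat" where "e2 i = (if odd i then 1 / 2 ^ (i div 2) else 0)"

definition wsum :: "(nat \<Rightarrow> rat) \<Rightarrow> (nat \<Rightarrow>\<^sub>0 nat) \<Rightarrow> rat" where
  "wsum e m = (\<Sum>i\<in>Poly_Mapping.keys m. of_nat (Poly_Mapping.lookup m i) * e i)"

lemma wsum_superset:
  assumes "finite S" "Poly_Mapping.keys m \<subseteq> S"
  shows "wsum e m = (\<Sum>i\<in>S. of_nat (Poly_Mapping.lookup m i) * e i)"
  unfolding wsum_def using assms
  by (intro sum.mono_neutral_left) (auto simp: in_keys_iff)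

lemma wsum_add: "wsum e (m + n) = wsum e m + wsum e n"
proof -
  let ?S = "Poly_Mapping.keys m \<union> Poly_Mapping.keys n \<union> Poly_Mapping.keys (m + n)"
  have "wsum e (m + n) = (\<Sum>i\<in>?S. of_nat (Poly_Mapping.lookup (m+n) i) * e i)" by (rule wsum_superset) auto
  moreover have "wsum e m = (\<Sum>i\<in>?S. of_nat (Poly_Mapping.lookup m i) * e i)" by (rule wsum_superset) auto
  moreover have "wsum e n = (\<Sum>i\<in>?S. of_nat (Poly_Mapping.lookup n i) * e i)" by (rule wsum_superset) auto
  ultimately show ?thesis by (simp add: lookup_add distrib_right sum.distrib)
qed

lemma wsum_single [simp]: "wsum e (Poly_Mapping.single i k) = of_nat k * e i"
  by (simp add: wsum_def)

lemma wsum_zero [simp]: "wsum e 0 = 0"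
  by (simp add: wsum_def)

lemma e1_nonneg: "e1 i \<ge> 0" and e2_nonneg: "e2 i \<ge> 0"
  by (auto simp: e1_def e2_def)

lemma w1_nonneg: "wsum e1 m \<ge> 0" and w2_nonneg: "wsum e2 m \<ge> 0"
  unfolding wsum_def by (auto intro!: sum_nonneg simp: e1_nonneg e2_nonneg)

lemma w_zero:
  assumes "wsum e1 m = 0" "wsum e2 m = 0"
  shows "m = 0"
proof (rule ccontr)
  assume "m \<noteq> 0"
  then obtain i where i: "i \<in> Poly_Mapping.keys m" by (metis all_not_in_conv keys_eq_empty)
  have "wsum e1 m + wsum e2 m = (\<Sum>j\<in>Poly_Mapping.keys m. of_nat (Poly_Mapping.lookup m j) * (e1 j + e2 j))"
    by (simp add: wsum_def sum.distrib[symmetric] distrib_left)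
  also have "\<dots> > 0"
  proof (rule sum_pos2[OF _ i])
    show "finite (Poly_Mapping.keys m)" by simp
    have "Poly_Mapping.lookup m i > 0" using i by (simp add: in_keys_iff)
    moreover have "e1 i + e2 i > 0" by (auto simp: e1_def e2_def)
    ultimately show "0 < of_nat (Poly_Mapping.lookup m i) * (e1 i + e2 i)" by simp
    show "\<And>j. j \<in> Poly_Mapping.keys m \<Longrightarrow> 0 \<le> of_nat (Poly_Mapping.lookup m j) * (e1 j + e2 j)"
      by (simp add: e1_nonneg e2_nonneg)
  qed
  finally show False using assms by simp
qed

definition cw :: "('a::comm_ring_1) mpoly_inf \<Rightarrow> rat \<Rightarrow> rat \<Rightarrow> 'a" where
  "cw p a b = Lsum (\<lambda>m. if wsum e1 m = a \<and> wsum e2 m = b then 1 else 0) p"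

lemma cw_add: "cw (p + q) a b = cw p a b + cw q a b"
  and cw_uminus: "cw (- p) a b = - cw p a b"
  and cw_diff: "cw (p - q) a b = cw p a b - cw q a b"
  and cw_zero [simp]: "cw 0 a b = 0"
  by (simp_all add: cw_def Lsum_add Lsum_uminus Lsum_diff)

lemma cw_single: "cw (Poly_Mapping.single m x) a b = (if wsum e1 m = a \<and> wsum e2 m = b then x else 0)"
  by (simp add: cw_def)

lemma cw_neg: "a < 0 \<or> b < 0 \<Longrightarrow> cw p a b = 0"
  unfolding cw_def Lsum_def using w1_nonneg w2_nonneg
  by (intro sum.neutral) (auto, (metis not_le)+)

lemma cw_const: "cw p 0 0 = Poly_Mapping.lookup p 0"
proof -
  have "cw p 0 0 = (\<Sum>m\<in>Poly_Mapping.keys p. Poly_Mapping.lookup p m * (if m = 0 then 1 else 0))"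
    unfolding cw_def Lsum_def
    by (intro sum.cong refl) (auto dest: w_zero)
  also have "\<dots> = (\<Sum>m\<in>Poly_Mapping.keys p. if m = 0 then Poly_Mapping.lookup p m else 0)"
    by (intro sum.cong) auto
  also have "\<dots> = Poly_Mapping.lookup p 0" by (simp add: in_keys_iff)
  finally show ?thesis .
qed

lemma cw_mult:
  "cw (g * p) a b = (\<Sum>n\<in>Poly_Mapping.keys g. Poly_Mapping.lookup g n * cw p (a - wsum e1 n) (b - wsum e2 n))"
proof -
  have "cw (g * p) a b = (\<Sum>n\<in>Poly_Mapping.keys g. \<Sum>k\<in>Poly_Mapping.keys p. cw (Poly_Mapping.single (n + k) (Poly_Mapping.lookup g n * Poly_Mapping.lookup p k)) a b)"
    by (subst mult_repr) (simp add: cw_def Lsum_sum)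
  also have "\<dots> = (\<Sum>n\<in>Poly_Mapping.keys g. Poly_Mapping.lookup g n * (\<Sum>k\<in>Poly_Mapping.keys p. Poly_Mapping.lookup p k * (if wsum e1 k = a - wsum e1 n \<and> wsum e2 k = b - wsum e2 n then 1 else 0)))"
    unfolding sum_distrib_left by (intro sum.cong refl) (auto simp: cw_single wsum_add)
  also have "\<dots> = (\<Sum>n\<in>Poly_Mapping.keys g. Poly_Mapping.lookup g n * cw p (a - wsum e1 n) (b - wsum e2 n))"
    by (simp add: cw_def Lsum_def)
  finally show ?thesis .
qed

lemma sum_keys_only0:
  assumes "\<And>n. n \<noteq> 0 \<Longrightarrow> Y n = 0"
  shows "(\<Sum>n\<in>Poly_Mapping.keys (g::('a::comm_ring_1) mpoly_inf). Poly_Mapping.lookup g n * Y n) = Poly_Mapping.lookup g (0::nat \<Rightarrow>\<^sub>0 nat) * Y 0"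
proof -
  have "(\<Sum>n\<in>Poly_Mapping.keys g. Poly_Mapping.lookup g n * Y n) = (\<Sum>n\<in>Poly_Mapping.keys g. if n = 0 then Poly_Mapping.lookup g n * Y n else 0)"
    using assms by (intro sum.cong) auto
  also have "\<dots> = Poly_Mapping.lookup g 0 * Y 0" by (simp add: in_keys_iff)
  finally show ?thesis .
qed

lemma Xv_pow: "(Xv i :: ('a::comm_ring_1) mpoly_inf) ^ k = Poly_Mapping.single (Poly_Mapping.single i k) 1"
proof (induction k)
  case 0 then show ?case by simp
next
  case (Suc k)
  have "(Xv i :: 'a mpoly_inf) ^ Suc k = Poly_Mapping.single (Poly_Mapping.single i k) 1 * Xv i"
    using Suc by (simp add: power_Suc2)
  also have "\<dots> = Poly_Mapping.single (Poly_Mapping.single i (Suc k)) 1"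
    by (simp add: Xv_def mult_single single_add[symmetric])
  finally show ?case .
qed

lemma e1_step: "e1 (i + 2) * 2 = e1 i" and e2_step: "e2 (i + 2) * 2 = e2 i"
  by (auto simp: e1_def e2_def)

lemma cw_Xv: "cw (Xv i :: ('a::comm_ring_1) mpoly_inf) a b = (if e1 i = a \<and> e2 i = b then 1 else 0)"
  by (simp add: Xv_def cw_single)

lemma cw_Xv_pow: "cw (Xv i ^ k :: ('a::comm_ring_1) mpoly_inf) a b = (if of_nat k * e1 i = a \<and> of_nat k * e2 i = b then 1 else 0)"
  by (simp add: Xv_pow cw_single)

lemma cw_rel: "cw (Xv i - Xv (i + 2) ^ 2 :: ('a::comm_ring_1) mpoly_inf) a b = 0"
proof -
  have "e1 (i+2) * 2 = e1 i" "e2 (i+2) * 2 = e2 i" by (rule e1_step, rule e2_step)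
  then show ?thesis by (simp add: cw_diff cw_Xv cw_Xv_pow mult.commute)
qed

lemma e_vals: "e1 0 = 1" "e2 0 = 0" "e1 1 = 0" "e2 1 = 1" "e1 (Suc 0) = 0" "e2 (Suc 0) = 1"
  by (auto simp: e1_def e2_def)

definition Mset :: "('a::comm_ring_1) mpoly_inf set" where
  "Mset = {p. Poly_Mapping.lookup p 0 = 0}"
definition Qset :: "('a::comm_ring_1) mpoly_inf set" where
  "Qset = {p. \<forall>a b. a < 1 \<and> b < 1 \<longrightarrow> cw p a b = 0}"
definition Jset :: "('a::comm_ring_1) \<Rightarrow> 'a mpoly_inf set" where
  "Jset l = {p \<in> Qset. cw p 0 1 = l * cw p 1 0}"
definition Jinf :: "('a::comm_ring_1) mpoly_inf set" where
  "Jinf = {p \<in> Qset. cw p 1 0 = 0}"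

lemma w_pos: "n \<noteq> 0 \<Longrightarrow> wsum e1 n > 0 \<or> wsum e2 n > 0"
  using w_zero[of n] w1_nonneg[of n] w2_nonneg[of n] by fastforce

lemma cw_mult_const:
  assumes "\<And>n. n \<noteq> 0 \<Longrightarrow> cw p (a - wsum e1 n) (b - wsum e2 n) = 0"
  shows "cw (r * p) a b = Poly_Mapping.lookup r 0 * cw p a b"
  unfolding cw_mult by (subst sum_keys_only0) (use assms in auto)

lemma tideal_Mset: "tideal Mset"
  unfolding tideal_def Mset_def
proof (intro conjI ballI allI; simp add: lookup_add)
  fix p r :: "'a mpoly_inf" assume p0: "Poly_Mapping.lookup p 0 = 0"
  then have p: "cw p 0 0 = 0" by (simp add: cw_const)
  have "cw (r * p) 0 0 = Poly_Mapping.lookup r 0 * cw p 0 0"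
    by (rule cw_mult_const) (auto intro!: cw_neg dest: w_pos)
  then show "Poly_Mapping.lookup (r * p) 0 = 0" by (simp add: cw_const p0)
qed

lemma Qset_mult:
  assumes p: "p \<in> Qset"
  shows "r * p \<in> Qset"
  unfolding Qset_def
proof (intro CollectI allI impI)
  fix a b :: rat assume ab: "a < 1 \<and> b < 1"
  show "cw (r * p) a b = 0"
    unfolding cw_mult
  proof (intro sum.neutral ballI)
    fix n :: "nat \<Rightarrow>\<^sub>0 nat"
    have "a - wsum e1 n < 1" "b - wsum e2 n < 1" using ab w1_nonneg[of n] w2_nonneg[of n] by auto
    then show "Poly_Mapping.lookup r n * cw p (a - wsum e1 n) (b - wsum e2 n) = 0" using p by (simp add: Qset_def)
  qed
qed

lemma tideal_Qset: "tideal Qset"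
  unfolding tideal_def using Qset_mult by (auto simp: Qset_def cw_add cw_uminus)

lemma cw_mult_10:
  assumes "p \<in> Qset"
  shows "cw (r * p) 1 0 = Poly_Mapping.lookup r 0 * cw p 1 0"
    and "cw (r * p) 0 1 = Poly_Mapping.lookup r 0 * cw p 0 1"
proof -
  have Q: "\<And>a b. a < 1 \<Longrightarrow> b < 1 \<Longrightarrow> cw p a b = 0" using assms by (auto simp: Qset_def)
  show "cw (r * p) 1 0 = Poly_Mapping.lookup r 0 * cw p 1 0"
  proof (rule cw_mult_const)
    fix n :: "nat \<Rightarrow>\<^sub>0 nat" assume "n \<noteq> 0"
    then consider "wsum e1 n > 0" | "wsum e2 n > 0" using w_pos by blast
    then show "cw p (1 - wsum e1 n) (0 - wsum e2 n) = 0"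
    proof cases
      case 1 then show ?thesis using Q w2_nonneg[of n] by simp
    next
      case 2 then show ?thesis by (intro cw_neg) simp
    qed
  qed
  show "cw (r * p) 0 1 = Poly_Mapping.lookup r 0 * cw p 0 1"
  proof (rule cw_mult_const)
    fix n :: "nat \<Rightarrow>\<^sub>0 nat" assume "n \<noteq> 0"
    then consider "wsum e1 n > 0" | "wsum e2 n > 0" using w_pos by blast
    then show "cw p (0 - wsum e1 n) (1 - wsum e2 n) = 0"
    proof cases
      case 2 then show ?thesis using Q w1_nonneg[of n] by simp
    next
      case 1 then show ?thesis by (intro cw_neg) simp
    qed
  qed
qed

lemma tideal_Jset: "tideal (Jset l)"
  using tideal_Qset unfolding tideal_def Jset_def
  by (auto simp: cw_add cw_uminus cw_mult_10 distrib_left)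

lemma tideal_Jinf: "tideal Jinf"
  using tideal_Qset unfolding tideal_def Jinf_def
  by (auto simp: cw_add cw_uminus cw_mult_10)

lemma rels_in:
  assumes "p \<in> (R2_rels :: ('a::comm_ring_1) mpoly_inf set)"
  shows "p \<in> Mset" "p \<in> Qset" "p \<in> Jset l" "p \<in> Jinf"
proof -
  have "(\<forall>a b. (a < 1 \<and> b < 1) \<or> (a = 1 \<and> b = 0) \<or> (a = 0 \<and> b = 1) \<longrightarrow> cw p a b = 0)"
    using assms unfolding R2_rels_def
  proof (elim UnE insertE rangeE emptyE)
    assume "p = Xv 0 ^ 2" then show ?thesis by (auto simp: cw_Xv_pow e_vals)
  next
    assume "p = Xv 1 ^ 2" then show ?thesis by (auto simp: cw_Xv_pow e_vals)
  next
    fix i assume "p = Xv i - Xv (i + 2) ^ 2" then show ?thesis using cw_rel[of i, where 'a='a] by simp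
  qed
  moreover have "Poly_Mapping.lookup p 0 = cw p 0 0" by (simp add: cw_const)
  ultimately show "p \<in> Mset" "p \<in> Qset" "p \<in> Jset l" "p \<in> Jinf"
    by (auto simp: Mset_def Qset_def Jset_def Jinf_def)
qed

lemma genideal_sub:
  assumes "tideal S" "R2_rels \<subseteq> S"
  shows "genideal poly_ring_inf (R2_rels :: ('a::comm_ring_1) mpoly_inf set) \<subseteq> S"
proof -
  interpret cring "poly_ring_inf :: 'a mpoly_inf ring" by (rule PR_cring)
  show ?thesis by (rule genideal_minimal) (use assms in \<open>auto simp: ideal_iff_tideal\<close>)
qed

lemma I0_sub: "genideal poly_ring_inf (R2_rels :: ('a::comm_ring_1) mpoly_inf set) \<subseteq> Mset"
  "genideal poly_ring_inf (R2_rels :: ('a::comm_ring_1) mpoly_inf set) \<subseteq> Qset"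
  "genideal poly_ring_inf (R2_rels :: ('a::comm_ring_1) mpoly_inf set) \<subseteq> Jset l"
  "genideal poly_ring_inf (R2_rels :: ('a::comm_ring_1) mpoly_inf set) \<subseteq> Jinf"
  by (intro genideal_sub tideal_Mset tideal_Qset tideal_Jset tideal_Jinf subsetI rels_in; assumption)+

lemma tideal_0: "tideal S \<Longrightarrow> 0 \<in> S"
  and tideal_add: "tideal S \<Longrightarrow> a \<in> S \<Longrightarrow> b \<in> S \<Longrightarrow> a + b \<in> S"
  and tideal_uminus: "tideal S \<Longrightarrow> a \<in> S \<Longrightarrow> - a \<in> S"
  and tideal_multl: "tideal S \<Longrightarrow> a \<in> S \<Longrightarrow> r * a \<in> S"
  by (auto simp: tideal_def)

lemma tideal_multr: "tideal S \<Longrightarrow> a \<in> S \<Longrightarrow> a * r \<in> S"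
  using tideal_multl[of S a r] by (simp add: mult.commute)

lemma tideal_diff: "tideal S \<Longrightarrow> a \<in> S \<Longrightarrow> b \<in> S \<Longrightarrow> a - b \<in> S"
  using tideal_add[of S a "-b"] tideal_uminus[of S b] by simp

lemma tideal_sum_aux: "finite A \<Longrightarrow> tideal S \<Longrightarrow> (\<And>i. i \<in> A \<Longrightarrow> f i \<in> S) \<Longrightarrow> sum f A \<in> S"
  by (induction A rule: finite_induct) (auto intro: tideal_0 tideal_add)

lemma tideal_sum: "tideal S \<Longrightarrow> finite A \<Longrightarrow> (\<And>i. i \<in> A \<Longrightarrow> f i \<in> S) \<Longrightarrow> sum f A \<in> S"
  using tideal_sum_aux by blast

lemma tideal_pow_cong:
  assumes "tideal S" "a - b \<in> S"
  shows "a ^ n - b ^ n \<in> S"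
proof -
  have "a ^ n - b ^ n = (a - b) * (\<Sum>i<n. b ^ (n - Suc i) * a ^ i)"
    by (rule power_diff_sumr2)
  then show ?thesis using tideal_multr[OF assms] by simp
qed

lemma tideal_pow: "tideal S \<Longrightarrow> a \<in> S \<Longrightarrow> n > 0 \<Longrightarrow> a ^ n \<in> S"
  by (cases n) (auto intro: tideal_multr)

lemma tideal_cong_mem: "tideal S \<Longrightarrow> a - b \<in> S \<Longrightarrow> b \<in> S \<Longrightarrow> a \<in> S"
  using tideal_add[of S "a - b" b] by simp

lemma tideal_sub_mem: "tideal S \<Longrightarrow> a \<in> S \<Longrightarrow> a - b \<in> S \<Longrightarrow> b \<in> S"
  using tideal_diff[of S a "a - b"] by simp

lemma monom_split:
  assumes "i \<in> Poly_Mapping.keys (m :: nat \<Rightarrow>\<^sub>0 nat)"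
  shows "(m - Poly_Mapping.single i 1) + Poly_Mapping.single i 1 = m"
proof (rule poly_mapping_eqI)
  fix k
  have "Poly_Mapping.lookup m i \<ge> 1" using assms by (simp add: in_keys_iff)
  then show "Poly_Mapping.lookup (m - Poly_Mapping.single i 1 + Poly_Mapping.single i 1) k = Poly_Mapping.lookup m k"
    by (auto simp: lookup_add lookup_minus lookup_single when_def)
qed

lemma Mset_sub:
  assumes S: "tideal S" and X: "\<And>i. Xv i \<in> S"
  shows "Mset \<subseteq> S"
proof
  fix p :: "'a mpoly_inf" assume "p \<in> Mset"
  then have p0: "Poly_Mapping.lookup p 0 = 0" by (simp add: Mset_def)
  have "(\<Sum>m\<in>Poly_Mapping.keys p. Poly_Mapping.single m (Poly_Mapping.lookup p m)) \<in> S"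
  proof (rule tideal_sum[OF S finite_keys])
    fix m assume m: "m \<in> Poly_Mapping.keys p"
    then have "m \<noteq> 0" using p0 by (auto simp: in_keys_iff)
    then obtain i where i: "i \<in> Poly_Mapping.keys m" by (metis all_not_in_conv keys_eq_empty)
    have "Poly_Mapping.single m (Poly_Mapping.lookup p m) = Poly_Mapping.single (m - Poly_Mapping.single i 1) (Poly_Mapping.lookup p m) * Xv i"
      unfolding Xv_def mult_single monom_split[OF i] by simp
    then show "Poly_Mapping.single m (Poly_Mapping.lookup p m) \<in> S" using tideal_multl[OF S X] by simp
  qed
  then show "p \<in> S" using poly_repr[of p] by simp
qed

definition I0 :: "('a::comm_ring_1) mpoly_inf set" where
  "I0 = genideal poly_ring_inf R2_rels"

lemma I0_ideal: "ideal I0 (poly_ring_inf :: ('a::comm_ring_1) mpoly_inf ring)"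
proof -
  interpret cring "poly_ring_inf :: 'a mpoly_inf ring" by (rule PR_cring)
  show ?thesis unfolding I0_def by (rule genideal_ideal) simp
qed

lemma tideal_I0: "tideal I0"
  using I0_ideal ideal_iff_tideal by blast

lemma rels_I0: "R2_rels \<subseteq> I0"
proof -
  interpret cring "poly_ring_inf :: 'a mpoly_inf ring" by (rule PR_cring)
  show ?thesis unfolding I0_def by (rule genideal_self) simp
qed

lemma rel_I0: "Xv i - Xv (i + 2) ^ 2 \<in> I0"
  using rels_I0 unfolding R2_rels_def by auto

lemma sq01_I0: "Xv 0 ^ 2 \<in> I0" "Xv 1 ^ 2 \<in> I0"
  using rels_I0 unfolding R2_rels_def by auto

lemma Xv_iter: "(Xv i :: ('a::comm_ring_1) mpoly_inf) - Xv (i + 2 * t) ^ (2 ^ t) \<in> I0"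
proof (induction t)
  case 0 then show ?case using tideal_0[OF tideal_I0] by simp
next
  case (Suc t)
  have f1: "(Xv (i + 2 * t) :: 'a mpoly_inf) ^ (2 ^ t) - (Xv (i + 2 * t + 2) ^ 2) ^ (2 ^ t) \<in> I0"
    by (rule tideal_pow_cong[OF tideal_I0 rel_I0])
  have f2: "((Xv (i + 2 * t + 2) :: 'a mpoly_inf) ^ 2) ^ (2 ^ t) = Xv (i + 2 * Suc t) ^ (2 ^ Suc t)"
    by (simp add: power_mult[symmetric] mult.commute)
  have "(Xv (i + 2 * t) :: 'a mpoly_inf) ^ (2 ^ t) - Xv (i + 2 * Suc t) ^ (2 ^ Suc t) \<in> I0"
    using f1 unfolding f2 .
  from tideal_add[OF tideal_I0 Suc.IH this] show ?case by simp
qed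

lemma Xv_nil: "(Xv j :: ('a::comm_ring_1) mpoly_inf) ^ (2 ^ (j + 1)) \<in> I0"
proof (induction j rule: less_induct)
  case (less j)
  show ?case
  proof (cases "j < 2")
    case True
    then have "(Xv j :: 'a mpoly_inf) ^ 2 \<in> I0" using sq01_I0 by (cases j) (auto simp: numeral_2_eq_2 less_Suc_eq)
    moreover have "(Xv j :: 'a mpoly_inf) ^ (2 ^ (j + 1)) = Xv j ^ 2 * Xv j ^ (2 ^ (j + 1) - 2)"
      using True by (auto simp: power_add[symmetric] less_Suc_eq numeral_2_eq_2)
    ultimately show ?thesis using tideal_multr[OF tideal_I0] by simp
  next
    case False
    then obtain i where j: "j = i + 2" by (metis add.commute le_Suc_ex not_less)
    have IH: "(Xv i :: 'a mpoly_inf) ^ (2 ^ (i + 1)) \<in> I0" using less.IH[of i] j by simp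
    have "(Xv i :: 'a mpoly_inf) ^ (2 ^ (i + 1)) - (Xv (i + 2) ^ 2) ^ (2 ^ (i + 1)) \<in> I0"
      by (rule tideal_pow_cong[OF tideal_I0 rel_I0])
    then have h1: "((Xv (i + 2) :: 'a mpoly_inf) ^ 2) ^ (2 ^ (i + 1)) \<in> I0"
      by (rule tideal_sub_mem[OF tideal_I0 IH])
    have h2: "((Xv (i + 2) :: 'a mpoly_inf) ^ 2) ^ (2 ^ (i + 1)) = Xv (i + 2) ^ (2 ^ (i + 2))"
      by (simp add: power_mult[symmetric] mult.commute)
    have h3: "(2::nat) ^ (i + 2) \<le> 2 ^ (j + 1)" using j by simp
    have h4: "(Xv j :: 'a mpoly_inf) ^ (2 ^ (j + 1)) = Xv (i + 2) ^ (2 ^ (i + 2)) * Xv j ^ (2 ^ (j + 1) - 2 ^ (i + 2))"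
      using h3 j by (simp add: power_add[symmetric])
    show ?thesis unfolding h4 using h1 h2 tideal_multr[OF tideal_I0] by simp
  qed
qed




subsection \<open>The quotient\<close>

definition qc :: "('a::comm_ring_1) mpoly_inf \<Rightarrow> 'a mpoly_inf set" where
  "qc p = I0 +>\<^bsub>poly_ring_inf\<^esub> p"

lemma R2_eq: "(R2 :: ('a::comm_ring_1) mpoly_inf set ring) = poly_ring_inf Quot I0"
  by (simp add: R2_def I0_def)

lemma qc_set: "qc p = {h + p |h. h \<in> I0}"
  unfolding qc_def a_r_coset_def' by auto

lemma R2_cring: "cring (R2 :: ('a::comm_ring_1) mpoly_inf set ring)"
proof -
  interpret cring "poly_ring_inf :: 'a mpoly_inf ring" by (rule PR_cring)
  show ?thesis unfolding R2_eq by (rule ideal.quotient_is_cring[OF I0_ideal PR_cring])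
qed

lemma qc_hom: "qc \<in> ring_hom poly_ring_inf (R2 :: ('a::comm_ring_1) mpoly_inf set ring)"
proof -
  interpret cring "poly_ring_inf :: 'a mpoly_inf ring" by (rule PR_cring)
  have "(\<lambda>p. I0 +>\<^bsub>poly_ring_inf\<^esub> p) \<in> ring_hom poly_ring_inf (poly_ring_inf Quot (I0 :: 'a mpoly_inf set))"
    by (rule ideal.rcos_ring_hom[OF I0_ideal])
  then show ?thesis unfolding R2_eq qc_def[abs_def] .
qed

lemma qc_mult: "qc (a * b) = qc a \<otimes>\<^bsub>(R2 :: ('a::comm_ring_1) mpoly_inf set ring)\<^esub> qc b"
  using ring_hom_mult[OF qc_hom, of a b] by simp

lemma qc_add: "qc (a + b) = qc a \<oplus>\<^bsub>(R2 :: ('a::comm_ring_1) mpoly_inf set ring)\<^esub> qc b"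
  using ring_hom_add[OF qc_hom, of a b] by simp

lemma qc_one: "qc 1 = \<one>\<^bsub>(R2 :: ('a::comm_ring_1) mpoly_inf set ring)\<^esub>"
  using ring_hom_one[OF qc_hom] by simp

lemma carrier_R2: "carrier (R2 :: ('a::comm_ring_1) mpoly_inf set ring) = range qc"
  unfolding R2_eq FactRing_def A_RCOSETS_def' qc_def by auto

lemma zero_R2: "\<zero>\<^bsub>(R2 :: ('a::comm_ring_1) mpoly_inf set ring)\<^esub> = I0"
  unfolding R2_eq FactRing_def by simp

lemma qc_eq: "qc a = qc b \<longleftrightarrow> a - b \<in> (I0 :: ('a::comm_ring_1) mpoly_inf set)"
proof
  assume "qc a = qc b"
  moreover have "a \<in> qc a" unfolding qc_set using tideal_0[OF tideal_I0] by (auto intro!: exI[of _ 0])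
  ultimately obtain h where "h \<in> I0" "a = h + b" unfolding qc_set by auto
  then show "a - b \<in> I0" by simp
next
  assume ab: "a - b \<in> I0"
  show "qc a = qc b"
  proof (unfold qc_set, safe)
    fix h assume "h \<in> (I0 :: 'a mpoly_inf set)"
    then show "\<exists>h'. h + a = h' + b \<and> h' \<in> I0"
      using ab by (intro exI[of _ "h + (a - b)"]) (auto intro: tideal_add[OF tideal_I0])
  next
    fix h assume "h \<in> (I0 :: 'a mpoly_inf set)"
    then show "\<exists>h'. h + b = h' + a \<and> h' \<in> I0"
      using ab by (intro exI[of _ "h - (a - b)"]) (auto intro: tideal_diff[OF tideal_I0])
  qed
qed

lemma qc_zero_iff: "qc a = \<zero>\<^bsub>(R2 :: ('a::comm_ring_1) mpoly_inf set ring)\<^esub> \<longleftrightarrow> a \<in> I0"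
proof -
  have "qc (0 :: 'a mpoly_inf) = I0" unfolding qc_set by auto
  then show ?thesis using qc_eq[of a 0] by (simp add: zero_R2)
qed

definition pre :: "('a::comm_ring_1) mpoly_inf set set \<Rightarrow> 'a mpoly_inf set" where
  "pre J = {p. qc p \<in> J}"

lemma pre_props:
  assumes J: "ideal J (R2 :: ('a::comm_ring_1) mpoly_inf set ring)"
  shows "tideal (pre J)" "I0 \<subseteq> pre J" "J = qc ` pre J"
proof -
  interpret cring "poly_ring_inf :: 'a mpoly_inf ring" by (rule PR_cring)
  interpret rh: ring_hom_ring poly_ring_inf "R2 :: 'a mpoly_inf set ring" qc
    using qc_hom cring.axioms(1)[OF R2_cring] cring.axioms(1)[OF PR_cring] by (intro ring_hom_ringI2)
  have "ideal {r \<in> carrier poly_ring_inf. qc r \<in> J} poly_ring_inf"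
    by (rule rh.ideal_vimage[OF J])
  then show "tideal (pre J)" unfolding pre_def by (simp add: ideal_iff_tideal)
  show "I0 \<subseteq> pre J"
  proof
    fix p :: "'a mpoly_inf" assume "p \<in> I0"
    then have "qc p = \<zero>\<^bsub>R2 :: 'a mpoly_inf set ring\<^esub>" by (simp add: qc_zero_iff)
    then show "p \<in> pre J" unfolding pre_def
      using additive_subgroup.zero_closed[OF ideal.axioms(1)[OF J]] by simp
  qed
  have "J \<subseteq> carrier R2" using additive_subgroup.a_subset[OF ideal.axioms(1)[OF J]] by simp
  then have Jr: "J \<subseteq> range qc" by (simp add: carrier_R2)
  show "J = qc ` pre J"
  proof
    show "J \<subseteq> qc ` pre J"
    proof
      fix x assume x: "x \<in> J"
      with Jr obtain p where p: "x = qc p" by blast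
      with x have "p \<in> pre J" by (simp add: pre_def)
      with p show "x \<in> qc ` pre J" by blast
    qed
    show "qc ` pre J \<subseteq> J" by (auto simp: pre_def)
  qed
qed

lemma img_ideal:
  assumes S: "tideal S" and I: "I0 \<subseteq> S"
  shows "ideal (qc ` S) (R2 :: ('a::comm_ring_1) mpoly_inf set ring)"
    and "qc p \<in> qc ` S \<longleftrightarrow> p \<in> S"
proof -
  interpret cring "poly_ring_inf :: 'a mpoly_inf ring" by (rule PR_cring)
  have "ideal ((+>\<^bsub>poly_ring_inf\<^esub>) I0 ` S) (poly_ring_inf Quot (I0 :: 'a mpoly_inf set))"
    by (rule ring_ideal_imp_quot_ideal[OF I0_ideal]) (use S in \<open>simp add: ideal_iff_tideal\<close>)
  then show "ideal (qc ` S) (R2 :: 'a mpoly_inf set ring)"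
    unfolding R2_eq qc_def[abs_def] by simp
  show "qc p \<in> qc ` S \<longleftrightarrow> p \<in> S"
  proof
    assume "qc p \<in> qc ` S"
    then obtain s where "s \<in> S" "qc p = qc s" by auto
    then have "p - s \<in> S" using qc_eq[of p s] I by auto
    then show "p \<in> S" using tideal_cong_mem[OF S _ \<open>s \<in> S\<close>] by simp
  qed auto
qed

subsection \<open>Neumann's covering lemma (weak form)\<close>

definition grp :: "'b::ab_group_add set \<Rightarrow> bool" where
  "grp H \<longleftrightarrow> 0 \<in> H \<and> (\<forall>a\<in>H. \<forall>b\<in>H. a + b \<in> H) \<and> (\<forall>a\<in>H. - a \<in> H)"

lemma grp_diff: "grp H \<Longrightarrow> a \<in> H \<Longrightarrow> b \<in> H \<Longrightarrow> a - b \<in> H"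
  unfolding grp_def by (metis diff_conv_add_uminus)

lemma grp_add: "grp H \<Longrightarrow> a \<in> H \<Longrightarrow> b \<in> H \<Longrightarrow> a + b \<in> H"
  unfolding grp_def by blast

lemma neumann_aux:
  fixes G :: "'b::ab_group_add set"
  assumes "finite Hs" and G: "grp G"
  shows "finite C \<Longrightarrow> snd ` C \<subseteq> Hs \<Longrightarrow> (\<forall>c\<in>C. grp (snd c) \<and> snd c \<subseteq> G) \<Longrightarrow>
    (\<forall>x\<in>G. \<exists>c\<in>C. x - fst c \<in> snd c) \<Longrightarrow>
    \<exists>H\<in>snd ` C. \<exists>T. finite T \<and> (\<forall>x\<in>G. \<exists>t\<in>T. x - t \<in> H)"
  using assms(1)
proof (induction Hs arbitrary: C rule: finite_induct)
  case empty
  then have "C = {}" by blast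
  moreover have "0 \<in> G" using G by (simp add: grp_def)
  ultimately show ?case using empty.prems(4) by blast
next
  case (insert H1 Hs)
  show ?case
  proof (cases "H1 \<in> snd ` C")
    case False
    then have "snd ` C \<subseteq> Hs" using insert.prems(2) by auto
    then show ?thesis by (rule insert.IH[OF insert.prems(1) _ insert.prems(3) insert.prems(4)])
  next
    case True
    define C1 where "C1 = fst ` {c\<in>C. snd c = H1}"
    have finC1: "finite C1" unfolding C1_def using insert.prems(1) by simp
    show ?thesis
    proof (cases "\<forall>x\<in>G. \<exists>t\<in>C1. x - t \<in> H1")
      case True
      then show ?thesis using \<open>H1 \<in> snd ` C\<close> finC1 by blast
    next
      case False
      then obtain x where x: "x \<in> G" "\<And>t. t \<in> C1 \<Longrightarrow> x - t \<notin> H1" by blast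
      define C0 where "C0 = {c\<in>C. snd c \<noteq> H1}"
      define C' where "C' = C0 \<union> (\<lambda>(y, c). (y - x + fst c, snd c)) ` (C1 \<times> C0)"
      have finC0: "finite C0" unfolding C0_def using insert.prems(1) by simp
      have finC': "finite C'" unfolding C'_def using finC0 finC1 by simp
      have sndC': "snd ` C' \<subseteq> snd ` C0"
      proof
        fix H assume "H \<in> snd ` C'"
        then obtain c where c: "c \<in> C'" "H = snd c" by blast
        show "H \<in> snd ` C0"
        proof (cases "c \<in> C0")
          case True then show ?thesis using c by blast
        next
          case False
          then obtain y c0 where "c0 \<in> C0" "c = (y - x + fst c0, snd c0)"
            using c(1) unfolding C'_def by auto
          then show ?thesis using c by simp
        qed
      qed
      have sndC0: "snd ` C0 \<subseteq> snd ` C" unfolding C0_def by auto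
      have "snd ` C0 \<subseteq> Hs" using insert.prems(2) unfolding C0_def by auto
      then have Hs': "snd ` C' \<subseteq> Hs" using sndC' by auto
      have grpC': "\<forall>c\<in>C'. grp (snd c) \<and> snd c \<subseteq> G"
      proof
        fix c assume "c \<in> C'"
        then have "snd c \<in> snd ` C" using imageI[OF \<open>c \<in> C'\<close>, of snd] sndC' sndC0 by blast
        then obtain c0 where "c0 \<in> C" "snd c = snd c0" by blast
        then show "grp (snd c) \<and> snd c \<subseteq> G" using insert.prems(3) by simp
      qed
      have cov: "\<forall>z\<in>G. \<exists>c\<in>C'. z - fst c \<in> snd c"
      proof
        fix z assume z: "z \<in> G"
        then obtain c where c: "c \<in> C" "z - fst c \<in> snd c" using insert.prems(4) by blast
        show "\<exists>c\<in>C'. z - fst c \<in> snd c"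
        proof (cases "snd c = H1")
          case False
          then have "c \<in> C'" using c unfolding C'_def C0_def by auto
          then show ?thesis using c by blast
        next
          case True
          have g: "fst c \<in> C1" using c True unfolding C1_def by auto
          have "snd c \<subseteq> G" "grp (snd c)" using insert.prems(3) c by auto
          then have "z - fst c \<in> G" using c by auto
          then have xz: "x + (z - fst c) \<in> G" using x(1) G grp_add by blast
          then obtain c' where c': "c' \<in> C" "x + (z - fst c) - fst c' \<in> snd c'"
            using insert.prems(4) by blast
          have "snd c' \<noteq> H1"
          proof
            assume h: "snd c' = H1"
            have "grp H1" using insert.prems(3) c' h by auto
            have "(x + (z - fst c) - fst c') - (z - fst c) \<in> H1"
              using grp_diff[OF \<open>grp H1\<close>, of "x + (z - fst c) - fst c'" "z - fst c"] c' c h True by simp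
            then have "x - fst c' \<in> H1" by (simp add: algebra_simps)
            moreover have "fst c' \<in> C1" using c' h unfolding C1_def by auto
            ultimately show False using x(2) by blast
          qed
          then have "c' \<in> C0" using c' unfolding C0_def by auto
          then have "(fst c, c') \<in> C1 \<times> C0" using g by simp
          then have "(\<lambda>(y, c). (y - x + fst c, snd c)) (fst c, c') \<in> C'"
            unfolding C'_def by blast
          then have "(fst c - x + fst c', snd c') \<in> C'" by simp
          moreover have "z - (fst c - x + fst c') \<in> snd c'"
            using c'(2) by (simp add: algebra_simps)
          ultimately show ?thesis by (metis fst_conv snd_conv)
        qed
      qed
      obtain H T where "H \<in> snd ` C'" "finite T" "\<forall>x\<in>G. \<exists>t\<in>T. x - t \<in> H"
        using insert.IH[OF finC' Hs' grpC' cov] by blast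
      moreover have "H \<in> snd ` C" using \<open>H \<in> snd ` C'\<close> sndC' sndC0 by (meson subsetD)
      ultimately show ?thesis by blast
    qed
  qed
qed

lemma neumann:
  fixes G :: "'b::ab_group_add set"
  assumes "grp G" "finite C" "\<forall>c\<in>C. grp (snd c) \<and> snd c \<subseteq> G" "\<forall>x\<in>G. \<exists>c\<in>C. x - fst c \<in> snd c"
  shows "\<exists>H\<in>snd ` C. \<exists>T. finite T \<and> (\<forall>x\<in>G. \<exists>t\<in>T. x - t \<in> H)"
  by (rule neumann_aux[of "snd ` C" G C]) (use assms in auto)

lemma grp_tideal: "tideal A \<Longrightarrow> grp A"
  unfolding grp_def tideal_def by simp

lemma grp_inter: "tideal A \<Longrightarrow> tideal B \<Longrightarrow> grp (A \<inter> B)"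
  unfolding grp_def tideal_def by simp

subsection \<open>Finite index implies containing the variables\<close>

lemma Xv_Mset: "Xv i \<in> Mset"
proof -
  have "Poly_Mapping.single i (1::nat) \<noteq> 0" by (metis lookup_single_eq lookup_zero one_neq_zero)
  then show ?thesis by (simp add: Mset_def Xv_def lookup_single when_def)
qed

lemma fin_index_Xv:
  assumes S: "tideal S" and I: "I0 \<subseteq> S" and T: "finite T"
    and cov: "\<forall>x\<in>Mset. \<exists>t\<in>T. x - t \<in> S"
  shows "(Xv i :: ('a::comm_ring_1) mpoly_inf) \<in> S"
proof -
  define N where "N = card T"
  define j where "j = i + 2 * N"
  define z :: "'a mpoly_inf" where "z = Xv j"
  have zM: "z ^ t \<in> Mset" if "t \<ge> 1" for t
    using tideal_pow[OF tideal_Mset Xv_Mset, of t] that unfolding z_def by simp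
  define A where "A = {1..N+1}"
  define f where "f t = (SOME u. u \<in> T \<and> z ^ t - u \<in> S)" for t
  have fT: "f t \<in> T \<and> z ^ t - f t \<in> S" if "t \<in> A" for t
  proof -
    have "\<exists>u. u \<in> T \<and> z ^ t - u \<in> S" using cov zM[of t] that by (auto simp: A_def)
    then show ?thesis unfolding f_def by (rule someI_ex)
  qed
  have "card (f ` A) \<le> card T" using fT T by (intro card_mono) auto
  then have "card A > card (f ` A)" by (simp add: A_def N_def)
  then have "\<not> inj_on f A" by (rule pigeonhole)
  then obtain s0 t0 where st0: "s0 \<in> A" "t0 \<in> A" "s0 \<noteq> t0" "f s0 = f t0"
    unfolding inj_on_def by blast
  obtain s t where st: "s \<in> A" "t \<in> A" "s < t" "f s = f t"
  proof (cases "s0 < t0")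
    case True
    show ?thesis by (rule that[of s0 t0]) (use True st0 in auto)
  next
    case False
    then have "t0 < s0" using st0(3) by simp
    show ?thesis by (rule that[of t0 s0]) (use \<open>t0 < s0\<close> st0 in auto)
  qed
  have fs: "z ^ s - f s \<in> S" and ft: "z ^ t - f t \<in> S" using fT st(1,2) by auto
  have eq1: "z ^ s - z ^ t = (z ^ s - f s) - (z ^ t - f t)" using st by simp
  have d1: "z ^ s - z ^ t \<in> S" unfolding eq1 by (rule tideal_diff[OF S fs ft])
  define d where "d = t - s"
  have d: "d \<ge> 1" "t = s + d" using st by (auto simp: d_def)
  define E :: nat where "E = 2 ^ (j + 1)"
  have "z ^ s - z ^ t = z ^ s * (1 - z ^ d)" using d by (simp add: power_add algebra_simps)
  then have d2: "z ^ s * (1 - z ^ d) \<in> S" using d1 by simp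
  have "z ^ s * (1 - z ^ d) * (\<Sum>l<E. (z ^ d) ^ l) \<in> S" by (rule tideal_multr[OF S d2])
  moreover have "z ^ s * (1 - z ^ d) * (\<Sum>l<E. (z ^ d) ^ l) = z ^ s - z ^ s * (z ^ d) ^ E"
  proof -
    have g: "(1 - z ^ d) * (\<Sum>l<E. (z ^ d) ^ l) = 1 - (z ^ d) ^ E" by (simp add: one_diff_power_eq)
    have "z ^ s * (1 - z ^ d) * (\<Sum>l<E. (z ^ d) ^ l) = z ^ s * (1 - (z ^ d) ^ E)"
      using g by (simp add: mult.assoc)
    also have "\<dots> = z ^ s - z ^ s * (z ^ d) ^ E" by (simp add: right_diff_distrib)
    finally show ?thesis .
  qed
  ultimately have a: "z ^ s - z ^ s * (z ^ d) ^ E \<in> S" by simp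
  have zE: "z ^ E \<in> S" using Xv_nil I unfolding z_def E_def by blast
  have eq2: "z ^ s * (z ^ d) ^ E = z ^ E * z ^ (s + d * E - E)"
  proof -
    have "d * E \<ge> E" using d by simp
    then have e: "s + d * E = E + (s + d * E - E)" by arith
    have "z ^ s * (z ^ d) ^ E = z ^ (s + d * E)" by (simp add: power_add power_mult)
    also have "\<dots> = z ^ (E + (s + d * E - E))" using e by simp
    also have "\<dots> = z ^ E * z ^ (s + d * E - E)" by (rule power_add)
    finally show ?thesis .
  qed
  have b: "z ^ s * (z ^ d) ^ E \<in> S" unfolding eq2 by (rule tideal_multr[OF S zE])
  have zs: "z ^ s \<in> S" using tideal_cong_mem[OF S a b] .
  have "Xv i - z ^ (2 ^ N) \<in> I0" using Xv_iter[of i N] unfolding z_def j_def .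
  then have c1: "Xv i - z ^ (2 ^ N) \<in> S" using I by blast
  have "z ^ (2 ^ N) \<in> S"
  proof -
    have "s \<le> N" using st by (auto simp: A_def)
    also have "N < 2 ^ N" by (rule less_exp)
    finally have eq3: "z ^ (2 ^ N) = z ^ s * z ^ (2 ^ N - s)" by (simp add: power_add[symmetric])
    show ?thesis unfolding eq3 by (rule tideal_multr[OF S zs])
  qed
  then show ?thesis by (rule tideal_cong_mem[OF S c1])
qed

definition mR2 :: "('a::comm_ring_1) mpoly_inf set set" where
  "mR2 = qc ` Mset"

lemma I0_Mset: "I0 \<subseteq> Mset" and I0_Qset: "I0 \<subseteq> Qset"
  and I0_Jset: "I0 \<subseteq> Jset l" and I0_Jinf: "I0 \<subseteq> Jinf"
  using I0_sub unfolding I0_def by blast+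

lemma mR2_ideal: "ideal mR2 (R2 :: ('a::comm_ring_1) mpoly_inf set ring)"
  unfolding mR2_def by (rule img_ideal(1)[OF tideal_Mset I0_Mset])

lemma mR2_mem: "qc p \<in> mR2 \<longleftrightarrow> p \<in> Mset"
  unfolding mR2_def by (rule img_ideal(2)[OF tideal_Mset I0_Mset])

lemma lookup_mult_0: "Poly_Mapping.lookup (r * p) 0 = Poly_Mapping.lookup r 0 * Poly_Mapping.lookup (p :: ('a::comm_ring_1) mpoly_inf) 0"
proof -
  have "cw (r * p) 0 0 = Poly_Mapping.lookup r 0 * cw p 0 0"
    by (rule cw_mult_const) (auto intro!: cw_neg dest: w_pos)
  then show ?thesis by (simp add: cw_const)
qed

lemma mR2_prime: "primeideal mR2 (R2 :: ('a::field) mpoly_inf set ring)"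
proof (rule primeideal.intro[OF mR2_ideal R2_cring], rule primeideal_axioms.intro)
  have "qc 1 \<notin> (mR2 :: 'a mpoly_inf set set)" by (simp add: mR2_mem Mset_def)
  moreover have "qc 1 \<in> carrier (R2 :: 'a mpoly_inf set ring)" by (simp add: carrier_R2)
  ultimately show "carrier (R2 :: 'a mpoly_inf set ring) \<noteq> mR2" by blast
next
  fix a b assume a: "a \<in> carrier (R2 :: 'a mpoly_inf set ring)" and b: "b \<in> carrier (R2 :: 'a mpoly_inf set ring)"
    and ab: "a \<otimes>\<^bsub>R2\<^esub> b \<in> mR2"
  obtain x y where xy: "a = qc x" "b = qc y" using a b by (auto simp: carrier_R2)
  then have "qc (x * y) \<in> mR2" using ab by (simp add: qc_mult)
  then have "Poly_Mapping.lookup x 0 * Poly_Mapping.lookup y 0 = 0"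
    by (simp add: mR2_mem Mset_def lookup_mult_0)
  then show "a \<in> mR2 \<or> b \<in> mR2" using xy by (auto simp: mR2_mem Mset_def)
qed

lemma prime_eq_mR2:
  assumes P: "primeideal P (R2 :: ('a::field) mpoly_inf set ring)"
  shows "P = mR2"
proof -
  have PI: "ideal P (R2 :: 'a mpoly_inf set ring)" using P by (rule primeideal.axioms(1))
  define S where "S = pre P"
  have S: "tideal S" "I0 \<subseteq> S" "P = qc ` S" using pre_props[OF PI] unfolding S_def by auto
  have Smem: "qc p \<in> P \<longleftrightarrow> p \<in> S" for p unfolding S_def pre_def by simp
  have prime: "x \<in> S \<or> y \<in> S" if "x * y \<in> S" for x y
  proof -
    have "qc x \<otimes>\<^bsub>R2\<^esub> qc y \<in> P" using that by (simp add: Smem qc_mult[symmetric])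
    then show ?thesis using primeideal.I_prime[OF P, of "qc x" "qc y"] by (auto simp: carrier_R2 Smem)
  qed
  have one: "1 \<notin> S"
  proof
    assume "1 \<in> S"
    then have "\<one>\<^bsub>R2\<^esub> \<in> P" using Smem[of 1] by (simp add: qc_one)
    then have "P = carrier R2" by (rule ideal.one_imp_carrier[OF PI])
    then show False using primeideal.I_notcarr[OF P] by simp
  qed
  have X: "Xv i \<in> S" for i
  proof (induction i rule: less_induct)
    case (less i)
    show ?case
    proof (cases "i < 2")
      case True
      then have "(Xv i :: 'a mpoly_inf) ^ 2 \<in> I0" using sq01_I0 by (cases i) (auto simp: less_Suc_eq numeral_2_eq_2)
      then have "(Xv i :: 'a mpoly_inf) * Xv i \<in> S" using S(2) by (auto simp: power2_eq_square)
      then show ?thesis using prime by blast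
    next
      case False
      define k where "k = i - 2"
      have k: "i = k + 2" using False by (simp add: k_def)
      have "(Xv k :: 'a mpoly_inf) \<in> S" using less k by simp
      moreover have "(Xv k :: 'a mpoly_inf) - Xv (k + 2) ^ 2 \<in> S" using subsetD[OF S(2) rel_I0[of k]] .
      ultimately have "(Xv (k + 2) :: 'a mpoly_inf) ^ 2 \<in> S"
        by (rule tideal_sub_mem[OF S(1)])
      then have "(Xv (k + 2) :: 'a mpoly_inf) * Xv (k + 2) \<in> S" by (simp add: power2_eq_square)
      then show ?thesis using prime k by blast
    qed
  qed
  have MS: "Mset \<subseteq> S" by (rule Mset_sub[OF S(1) X])
  have SM: "S \<subseteq> Mset"
  proof
    fix p assume pS: "p \<in> S"
    show "p \<in> Mset"
    proof (rule ccontr)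
      assume "p \<notin> Mset"
      then have c: "Poly_Mapping.lookup p 0 \<noteq> 0" by (simp add: Mset_def)
      define c where "c = Poly_Mapping.lookup p 0"
      have "p - Poly_Mapping.single 0 c \<in> Mset" by (simp add: Mset_def c_def lookup_minus)
      then have "p - Poly_Mapping.single 0 c \<in> S" using MS by blast
      then have "Poly_Mapping.single 0 c \<in> S" by (rule tideal_sub_mem[OF S(1) pS])
      then have "Poly_Mapping.single 0 (1 / c) * Poly_Mapping.single 0 c \<in> S" using tideal_multl[OF S(1)] by blast
      moreover have "Poly_Mapping.single 0 (1 / c) * Poly_Mapping.single 0 c = (1 :: 'a mpoly_inf)"
        using c by (simp add: mult_single c_def)
      ultimately show False using one by simp
    qed
  qed
  have "S = Mset" using MS SM by blast
  then show ?thesis using S(3) unfolding mR2_def by simp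
qed

lemma mR2_sub_carrier: "mR2 \<subseteq> carrier (R2 :: ('a::comm_ring_1) mpoly_inf set ring)"
  unfolding mR2_def carrier_R2 by auto

lemma mR2_prod: "ideal_prod R2 mR2 mR2 = (mR2 :: ('a::comm_ring_1) mpoly_inf set set)"
proof
  interpret R: cring "R2 :: 'a mpoly_inf set ring" by (rule R2_cring)
  show "ideal_prod R2 mR2 mR2 \<subseteq> (mR2 :: 'a mpoly_inf set set)"
  proof
    fix x assume "x \<in> ideal_prod R2 mR2 (mR2 :: 'a mpoly_inf set set)"
    then show "x \<in> mR2"
    proof (induction x rule: ideal_prod.induct)
      case (prod i j)
      then show ?case using ideal.I_r_closed[OF mR2_ideal, of i j] mR2_sub_carrier by blast
    next
      case (sum s1 s2)
      then show ?case using additive_subgroup.a_closed[OF ideal.axioms(1)[OF mR2_ideal]] by blast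
    qed
  qed
  have PI: "ideal (ideal_prod R2 mR2 mR2) (R2 :: 'a mpoly_inf set ring)"
    by (rule R.ideal_prod_is_ideal[OF mR2_ideal mR2_ideal])
  define S where "S = pre (ideal_prod R2 mR2 (mR2 :: 'a mpoly_inf set set))"
  have S: "tideal S" "I0 \<subseteq> S" "ideal_prod R2 mR2 mR2 = qc ` S" using pre_props[OF PI] unfolding S_def by auto
  have X: "Xv i \<in> S" for i
  proof -
    have "(Xv i :: 'a mpoly_inf) - Xv (i + 2) * Xv (i + 2) \<in> I0" using rel_I0[of i] by (simp add: power2_eq_square)
    then have "qc (Xv i :: 'a mpoly_inf) = qc (Xv (i + 2) * Xv (i + 2))" by (simp add: qc_eq)
    also have "\<dots> = qc (Xv (i + 2)) \<otimes>\<^bsub>R2\<^esub> qc (Xv (i + 2))" by (rule qc_mult)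
    also have "\<dots> \<in> ideal_prod R2 mR2 mR2"
      by (rule ideal_prod.prod) (simp_all add: mR2_mem Xv_Mset)
    finally show ?thesis unfolding S_def pre_def by simp
  qed
  have "Mset \<subseteq> S" by (rule Mset_sub[OF S(1) X])
  then have "(mR2 :: 'a mpoly_inf set set) \<subseteq> qc ` S" unfolding mR2_def by (rule image_mono)
  then show "(mR2 :: 'a mpoly_inf set set) \<subseteq> ideal_prod R2 mR2 mR2" using S(3) by simp
qed

lemma mR2_nonzero: "(mR2 :: ('a::comm_ring_1) mpoly_inf set set) \<noteq> {\<zero>\<^bsub>R2 :: 'a mpoly_inf set ring\<^esub>}"
proof
  assume "(mR2 :: 'a mpoly_inf set set) = {\<zero>\<^bsub>R2 :: 'a mpoly_inf set ring\<^esub>}"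
  moreover have "qc (Xv 0) \<in> (mR2 :: 'a mpoly_inf set set)" by (simp add: mR2_mem Xv_Mset)
  ultimately have "qc (Xv 0 :: 'a mpoly_inf) = \<zero>\<^bsub>R2 :: 'a mpoly_inf set ring\<^esub>" by auto
  then have "(Xv 0 :: 'a mpoly_inf) \<in> I0" by (simp add: qc_zero_iff)
  then have "(Xv 0 :: 'a mpoly_inf) \<in> Jinf" using I0_Jinf by blast
  then show False by (simp add: Jinf_def cw_Xv e_vals)
qed

lemma mR2_avoid: "has_avoidance (R2 :: ('a::comm_ring_1) mpoly_inf set ring) mR2"
  unfolding has_avoidance_def
proof (intro allI impI)
  fix n :: nat and Is :: "nat \<Rightarrow> 'a mpoly_inf set set"
  assume A: "(\<forall>k<n. ideal (Is k) R2) \<and> mR2 \<subseteq> (\<Union>k<n. Is k)"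
  have Aid: "ideal (Is k) R2" if "k < n" for k using A that by blast
  have Acov: "mR2 \<subseteq> (\<Union>k\<in>{..<n}. Is k)" using A by blast
  define S where "S k = pre (Is k)" for k
  have S: "tideal (S k)" "I0 \<subseteq> S k" "Is k = qc ` S k" if "k < n" for k
    unfolding S_def using pre_props[OF Aid[OF that]] by auto
  define C where "C = (\<lambda>k. (0 :: 'a mpoly_inf, S k \<inter> Mset)) ` {..<n}"
  have gM: "grp (Mset :: 'a mpoly_inf set)" by (rule grp_tideal[OF tideal_Mset])
  have gC: "\<forall>c\<in>C. grp (snd c) \<and> snd c \<subseteq> Mset"
  proof
    fix c assume "c \<in> C"
    then obtain k where k0: "k \<in> {..<n}" "c = (0, S k \<inter> Mset)" unfolding C_def by (rule imageE)
    then have k: "k < n" "c = (0, S k \<inter> Mset)" by simp_all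
    have "grp (S k \<inter> Mset)" by (rule grp_inter[OF S(1)[OF k(1)] tideal_Mset])
    then show "grp (snd c) \<and> snd c \<subseteq> Mset" using k by simp
  qed
  have cov: "\<forall>x\<in>Mset. \<exists>c\<in>C. x - fst c \<in> snd c"
  proof
    fix x :: "'a mpoly_inf" assume x: "x \<in> Mset"
    then have "qc x \<in> mR2" by (simp add: mR2_mem)
    then obtain k where k0: "k \<in> {..<n}" "qc x \<in> Is k" using Acov by blast
    then have k: "k < n" "qc x \<in> Is k" by auto
    then have xS: "x \<in> S k" by (simp add: S_def pre_def)
    have "(0, S k \<inter> Mset) \<in> C" unfolding C_def using k(1) by simp
    moreover have "x - fst (0 :: 'a mpoly_inf, S k \<inter> Mset) \<in> snd (0 :: 'a mpoly_inf, S k \<inter> Mset)"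
      using x xS by simp
    ultimately show "\<exists>c\<in>C. x - fst c \<in> snd c" by (rule bexI[rotated])
  qed
  have finC: "finite C" unfolding C_def by simp
  obtain H T where H: "H \<in> snd ` C" "finite T" "\<forall>x\<in>Mset. \<exists>t\<in>T. x - t \<in> H"
    using neumann[OF gM finC gC cov] by blast
  then obtain c where c: "c \<in> C" "H = snd c" by blast
  from c(1) obtain k where k0: "k \<in> {..<n}" "c = (0, S k \<inter> Mset)" unfolding C_def by (rule imageE)
  then have k: "k < n" "H = S k \<inter> Mset" using c by simp_all
  have "Xv i \<in> S k" for i
    by (rule fin_index_Xv[OF S(1)[OF k(1)] S(2)[OF k(1)] H(2)]) (use H(3) k in blast)
  then have "Mset \<subseteq> S k" by (rule Mset_sub[OF S(1)[OF k(1)]])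
  then have "mR2 \<subseteq> Is k" unfolding mR2_def S(3)[OF k(1)] by auto
  then show "\<exists>k<n. mR2 \<subseteq> Is k" using k(1) by blast
qed

lemma not_avoid:
  assumes fin: "finite (UNIV :: ('a::field) set)"
  shows "\<not> avoidance_ring (R2 :: 'a mpoly_inf set ring)"
proof
  assume av: "avoidance_ring (R2 :: 'a mpoly_inf set ring)"
  define Qb :: "'a mpoly_inf set set" where "Qb = qc ` Qset"
  have Qb: "ideal Qb R2" unfolding Qb_def using img_ideal[OF tideal_Qset I0_Qset] by blast
  obtain h :: "nat \<Rightarrow> 'a" where h: "bij_betw h {0..<card (UNIV :: 'a set)} UNIV"
    using ex_bij_betw_nat_finite[OF fin] by blast
  define N where "N = card (UNIV :: 'a set)"
  define Is where "Is k = (if k < N then qc ` Jset (h k) else qc ` Jinf)" for k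
  have Is_ideal: "\<forall>k<N+1. ideal (Is k) R2"
    unfolding Is_def using img_ideal(1)[OF tideal_Jset I0_Jset] img_ideal(1)[OF tideal_Jinf I0_Jinf] by auto
  have Is_mem: "qc p \<in> Is k \<longleftrightarrow> p \<in> (if k < N then Jset (h k) else Jinf)" for p k
    unfolding Is_def by (simp add: img_ideal(2)[OF tideal_Jset I0_Jset] img_ideal(2)[OF tideal_Jinf I0_Jinf])
  have cover: "Qb \<subseteq> (\<Union>k<N+1. Is k)"
  proof
    fix x assume "x \<in> Qb"
    then obtain p where p: "p \<in> Qset" "x = qc p" unfolding Qb_def by blast
    show "x \<in> (\<Union>k<N+1. Is k)"
    proof (cases "cw p 1 0 = 0")
      case True
      then have "x \<in> Is N" using p Is_mem[of p N] by (simp add: Jinf_def)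
      then show ?thesis by auto
    next
      case False
      define l where "l = cw p 0 1 / cw p 1 0"
      have "l \<in> h ` {0..<N}" using h unfolding bij_betw_def N_def by simp
      then obtain k where k: "k < N" "h k = l" by auto
      have "p \<in> Jset l" using p False by (simp add: Jset_def l_def)
      then have "x \<in> Is k" using p k Is_mem[of p k] by simp
      then show ?thesis using k by auto
    qed
  qed
  have "has_avoidance R2 Qb" using av Qb unfolding avoidance_ring_def by blast
  then obtain k where k: "k < N + 1" "Qb \<subseteq> Is k"
    unfolding has_avoidance_def using Is_ideal cover by blast
  show False
  proof (cases "k < N")
    case True
    have "(Xv 1 :: 'a mpoly_inf) \<in> Qset" by (simp add: Qset_def cw_Xv e_vals)
    then have "qc (Xv 1 :: 'a mpoly_inf) \<in> Is k" using k unfolding Qb_def by blast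
    then have "(Xv 1 :: 'a mpoly_inf) \<in> Jset (h k)" using Is_mem True by simp
    then show False by (simp add: Jset_def cw_Xv e_vals)
  next
    case False
    have "(Xv 0 :: 'a mpoly_inf) \<in> Qset" by (simp add: Qset_def cw_Xv e_vals)
    then have "qc (Xv 0 :: 'a mpoly_inf) \<in> Is k" using k unfolding Qb_def by blast
    then have "(Xv 0 :: 'a mpoly_inf) \<in> Jinf" using Is_mem False by simp
    then show False by (simp add: Jinf_def cw_Xv e_vals)
  qed
qed

theorem mainTheorem11:
  assumes "finite (UNIV :: ('a::field) set)"
  shows "\<exists>m. (\<forall>P. primeideal P (R2 :: 'a mpoly_inf set ring) \<longleftrightarrow> P = m)
            \<and> ideal_prod R2 m m = m \<and> m \<noteq> {\<zero>\<^bsub>R2 :: 'a mpoly_inf set ring\<^esub>}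
            \<and> (\<forall>P. primeideal P (R2 :: 'a mpoly_inf set ring) \<longrightarrow> has_avoidance R2 P)
            \<and> \<not> avoidance_ring (R2 :: 'a mpoly_inf set ring)"
proof (intro exI[of _ mR2] conjI allI impI iffI)
  fix P assume "primeideal P (R2 :: 'a mpoly_inf set ring)"
  then show "P = mR2" by (rule prime_eq_mR2)
next
  fix P assume "P = (mR2 :: 'a mpoly_inf set set)"
  then show "primeideal P (R2 :: 'a mpoly_inf set ring)" using mR2_prime by simp
next
  show "ideal_prod R2 mR2 mR2 = (mR2 :: 'a mpoly_inf set set)" by (rule mR2_prod)
next
  show "(mR2 :: 'a mpoly_inf set set) \<noteq> {\<zero>\<^bsub>R2 :: 'a mpoly_inf set ring\<^esub>}" by (rule mR2_nonzero)
next
  fix P assume "primeideal P (R2 :: 'a mpoly_inf set ring)"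
  then have "P = mR2" by (rule prime_eq_mR2)
  then show "has_avoidance R2 P" using mR2_avoid by simp
next
  show "\<not> avoidance_ring (R2 :: 'a mpoly_inf set ring)" by (rule not_avoid[OF assms])
qed

end
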